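(* Let $M$ be an $\mathfrak{S}_2$-module, where $\mathfrak{S}_2:=\mathbb{Z}[s,t]/\bigl((1-s)(1-t),\,N(s)+N(t)-p\bigr)$, and write $s,t$ also for their actions on $M$. The following are equivalent: (1) $M$ is uniquely $p$-divisible; (2) $M$ is cohomologically trivial and $M=\ker(1-s)\oplus\ker(1-t)$; (3) $1-s$ restricts to an invertible map $\ker(1-t)\to\ker(1-t)$ and $1-t$ restricts to an invertible map $\ker(1-s)\to\ker(1-s)$.
   Context: $p$ is a prime and $N(x)=1+x+\dots+x^{p-1}$. An $\mathfrak{S}_2$-module is cohomologically trivial if $\operatorname{im}(1-t)=\ker(1-s)$ and $\operatorname{im}(1-s)=\ker(1-t)$. Uniquely $p$-divisible: multiplication by $p$ is bijective. *)

theory Defs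
  imports "HOL-Computational_Algebra.Primes"
begin

definition additive :: "('m::ab_group_add \<Rightarrow> 'm) \<Rightarrow> bool" where
  "additive f \<longleftrightarrow> (\<forall>x y. f (x + y) = f x + f y)"

definition natmult :: "nat \<Rightarrow> 'm::ab_group_add \<Rightarrow> 'm" where
  "natmult n m = (\<Sum>i<n. m)"

definition Nop :: "nat \<Rightarrow> ('m::ab_group_add \<Rightarrow> 'm) \<Rightarrow> 'm \<Rightarrow> 'm" where
  "Nop p f m = (\<Sum>i<p. (f ^^ i) m)"

text \<open>A module over S_2 = Z[s,t]/((1-s)(1-t), N(s)+N(t)-p): an abelian group with two
  commuting additive endomorphisms s, t satisfying the defining relations.\<close>
definition S2_module :: "nat \<Rightarrow> ('m::ab_group_add \<Rightarrow> 'm) \<Rightarrow> ('m \<Rightarrow> 'm) \<Rightarrow> bool" where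
  "S2_module p s t \<longleftrightarrow> additive s \<and> additive t \<and> (\<forall>m. s (t m) = t (s m)) \<and>
     (\<forall>m. (m - s m) - t (m - s m) = 0) \<and>
     (\<forall>m. Nop p s m + Nop p t m = natmult p m)"

definition uniquely_divisible :: "nat \<Rightarrow> ('m::ab_group_add) itself \<Rightarrow> bool" where
  "uniquely_divisible p (_::'m itself) \<longleftrightarrow> bij (natmult p :: 'm \<Rightarrow> 'm)"

definition kerop :: "('m::ab_group_add \<Rightarrow> 'm) \<Rightarrow> 'm set" where
  "kerop f = {m. m - f m = 0}"

definition imop :: "('m::ab_group_add \<Rightarrow> 'm) \<Rightarrow> 'm set" where
  "imop f = range (\<lambda>m. m - f m)"

definition cohom_trivial :: "('m::ab_group_add \<Rightarrow> 'm) \<Rightarrow> ('m \<Rightarrow> 'm) \<Rightarrow> bool" where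
  "cohom_trivial s t \<longleftrightarrow> imop t = kerop s \<and> imop s = kerop t"

definition internal_direct_sum :: "'m::ab_group_add set \<Rightarrow> 'm set \<Rightarrow> bool" where
  "internal_direct_sum A B \<longleftrightarrow> (\<forall>m. \<exists>!ab. fst ab \<in> A \<and> snd ab \<in> B \<and> m = fst ab + snd ab)"

end

theory Submission
  imports Defs
begin

lemma additive_0: "additive f \<Longrightarrow> f 0 = 0"
  unfolding additive_def by (metis add_cancel_left_left)
lemma additive_add: "additive f \<Longrightarrow> f (x + y) = f x + f y"
  unfolding additive_def by blast
lemma additive_uminus: "additive f \<Longrightarrow> f (- x) = - f x"
proof -
  assume a: "additive f"
  have "f (- x) + f x = 0" using additive_add[OF a, of "-x" x] additive_0[OF a] by simp
  then show ?thesis by (simp add: eq_neg_iff_add_eq_0)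
qed
lemma additive_diff: "additive f \<Longrightarrow> f (x - y) = f x - f y"
  using additive_add[of f x "-y"] additive_uminus[of f y] by simp
lemma additive_sum: "additive f \<Longrightarrow> f (sum g A) = (\<Sum>i\<in>A. f (g i))"
  by (induction A rule: infinite_finite_induct) (auto simp: additive_0 additive_add)
lemma additive_natmult: "additive f \<Longrightarrow> f (natmult n x) = natmult n (f x)"
  unfolding natmult_def by (simp add: additive_sum)
lemma natmult_add: "natmult n (x + y) = natmult n x + natmult n y"
  unfolding natmult_def by (simp add: sum.distrib)
lemma natmult_0: "natmult n 0 = 0" unfolding natmult_def by simp
lemma additive_natmult': "additive (natmult n)"
  unfolding additive_def by (simp add: natmult_add)
lemma natmult_diff: "natmult n (x - y) = natmult n x - natmult n y"
  using additive_diff[OF additive_natmult'] .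
lemma additive_funpow: "additive f \<Longrightarrow> additive (f ^^ n)"
  by (induction n) (auto simp: additive_def)
lemma additive_comp: "additive f \<Longrightarrow> additive g \<Longrightarrow> additive (\<lambda>x. f (g x))"
  unfolding additive_def by simp

typedef (overloaded) 'm endo = "{q :: ('m::ab_group_add \<Rightarrow> 'm) \<times> int. additive (fst q)}"
  morphisms Rep_endo Abs_endo
  by (rule exI[of _ "(id,0)"]) (simp add: additive_def)

definition ap :: "'m::ab_group_add endo \<Rightarrow> 'm \<Rightarrow> 'm" where "ap e = fst (Rep_endo e)"
definition ic :: "'m::ab_group_add endo \<Rightarrow> int" where "ic e = snd (Rep_endo e)"
definition mk :: "('m::ab_group_add \<Rightarrow> 'm) \<Rightarrow> int \<Rightarrow> 'm endo" where "mk f n = Abs_endo (f, n)"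

lemma ap_mk[simp]: "additive f \<Longrightarrow> ap (mk f n) = f"
  unfolding ap_def mk_def by (simp add: Abs_endo_inverse)
lemma ic_mk[simp]: "additive f \<Longrightarrow> ic (mk f n) = n"
  unfolding ic_def mk_def by (simp add: Abs_endo_inverse)
lemma additive_ap[simp]: "additive (ap e)"
  unfolding ap_def using Rep_endo by auto
lemma endo_eq: "e = e' \<longleftrightarrow> ap e = ap e' \<and> ic e = ic e'"
  unfolding ap_def ic_def by (metis Rep_endo_inject prod.expand)
lemma ap_add: "ap e (x + y) = ap e x + ap e y" by (simp add: additive_add)
lemma ap_0[simp]: "ap e 0 = 0" by (simp add: additive_0)
lemma ap_uminus: "ap e (- x) = - ap e x" by (rule additive_uminus[OF additive_ap])
lemma ap_diff: "ap e (x - y) = ap e x - ap e y" by (rule additive_diff[OF additive_ap])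

lemma add_plus: "additive (\<lambda>x. f x + g x)" if "additive f" "additive g"
  using that unfolding additive_def by (simp add: algebra_simps)
lemma add_minus: "additive (\<lambda>x. f x - g x)" if "additive f" "additive g"
  using that unfolding additive_def by (simp add: algebra_simps)
lemma add_uminus: "additive (\<lambda>x. - f x)" if "additive f"
  using that unfolding additive_def by (simp add: algebra_simps)

instantiation endo :: (ab_group_add) ring_1
begin
definition "0 = mk (\<lambda>_. 0) 0"
definition "1 = mk id 1"
definition "e + e' = mk (\<lambda>x. ap e x + ap e' x) (ic e + ic e')"
definition "- e = mk (\<lambda>x. - ap e x) (- ic e)"
definition "e - e' = mk (\<lambda>x. ap e x - ap e' x) (ic e - ic e')"
definition "e * e' = mk (\<lambda>x. ap e (ap e' x)) (ic e * ic e')"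

lemma ap_zero[simp]: "ap (0::'a endo) = (\<lambda>_. 0)" and ic_zero[simp]: "ic (0::'a endo) = 0"
  unfolding zero_endo_def by (simp_all add: additive_def)
lemma ap_one[simp]: "ap (1::'a endo) = id" and ic_one[simp]: "ic (1::'a endo) = 1"
  unfolding one_endo_def by (simp_all add: additive_def)
lemma ap_plus[simp]: "ap (e + e') = (\<lambda>x. ap e x + ap e' x)" and ic_plus[simp]: "ic (e + e') = ic e + ic e'"
  unfolding plus_endo_def by (simp_all add: add_plus)
lemma ap_minus[simp]: "ap (e - e') = (\<lambda>x. ap e x - ap e' x)" and ic_minus[simp]: "ic (e - e') = ic e - ic e'"
  unfolding minus_endo_def by (simp_all add: add_minus)
lemma ap_neg[simp]: "ap (- e) = (\<lambda>x. - ap e x)" and ic_neg[simp]: "ic (- e) = - ic e"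
  unfolding uminus_endo_def by (simp_all add: add_uminus)
lemma ap_times[simp]: "ap (e * e') = (\<lambda>x. ap e (ap e' x))" and ic_times[simp]: "ic (e * e') = ic e * ic e'"
  unfolding times_endo_def by (simp_all add: additive_comp)

instance
  by standard (auto simp: endo_eq fun_eq_iff algebra_simps ap_add ap_diff)
end

lemma ap_of_nat: "ap (of_nat n :: 'm::ab_group_add endo) x = natmult n x"
  by (induction n) (auto simp: natmult_def)
lemma ap_power: "ap (e ^ n) = ap e ^^ n"
  by (induction n) (auto simp: fun_eq_iff funpow_Suc_right)
lemma ap_sum: "ap (sum f A) x = (\<Sum>i\<in>A. ap (f i) x)"
  by (induction A rule: infinite_finite_induct) auto

lemma binom1:
  fixes x :: "'a::ring_1"
  shows "(1 + x)^n = (\<Sum>k\<le>n. of_nat (n choose k) * x^k)"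
proof (induction n)
  case 0 show ?case by simp
next
  case (Suc n)
  have e1: "(1+x)^Suc n = (1+x)^n + (1+x)^n * x" by (simp only: power_Suc2 distrib_left mult_1_right)
  have e2: "(1+x)^n * x = (\<Sum>k\<le>n. of_nat (n choose k) * x^Suc k)"
    by (simp add: Suc.IH sum_distrib_right mult.assoc power_Suc2 del: power_Suc)
  have e3: "(\<Sum>k\<le>n. of_nat (n choose k) * x^k) = (\<Sum>k\<le>Suc n. of_nat (n choose k) * x^k)"
    by (simp add: binomial_eq_0)
  also have "\<dots> = 1 + (\<Sum>k\<le>n. of_nat (n choose Suc k) * x^Suc k)"
    by (subst sum.atMost_Suc_shift) simp
  finally have e3': "(\<Sum>k\<le>n. of_nat (n choose k) * x^k) = 1 + (\<Sum>k\<le>n. of_nat (n choose Suc k) * x^Suc k)" .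
  have "(\<Sum>k\<le>Suc n. of_nat (Suc n choose k) * x^k) = 1 + (\<Sum>k\<le>n. of_nat (Suc n choose Suc k) * x^Suc k)"
    by (subst sum.atMost_Suc_shift) simp
  also have "\<dots> = 1 + (\<Sum>k\<le>n. of_nat (n choose Suc k) * x^Suc k) + (\<Sum>k\<le>n. of_nat (n choose k) * x^Suc k)"
    by (simp add: distrib_right sum.distrib algebra_simps)
  finally show ?case using e1 e2 e3' Suc.IH by simp
qed

lemma binom_prime:
  fixes y :: "'a::ring_1"
  assumes "prime p"
  shows "(1 + y)^p = 1 + y^p + of_nat p * (\<Sum>k\<in>{1..<p}. of_nat ((p choose k) div p) * y^k)"
proof -
  have p1: "p > 1" using assms prime_gt_1_nat by blast
  have dec: "{..p} = insert 0 (insert p {1..<p})" using p1 by auto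
  have fin: "finite {1..<p}" by simp
  have "(1 + y)^p = (\<Sum>k\<le>p. of_nat (p choose k) * y^k)" by (rule binom1)
  also have "\<dots> = 1 + (y^p + (\<Sum>k\<in>{1..<p}. of_nat (p choose k) * y^k))"
    unfolding dec using p1 by (simp add: sum.insert)
  also have "(\<Sum>k\<in>{1..<p}. of_nat (p choose k) * y^k) = (\<Sum>k\<in>{1..<p}. of_nat p * (of_nat ((p choose k) div p) * y^k))"
  proof (rule sum.cong)
    fix k assume "k \<in> {1..<p}"
    then have "p dvd (p choose k)" using dvd_choose_prime[of k p] assms by auto
    then have "p choose k = p * ((p choose k) div p)" by simp
    then have "(of_nat (p choose k) :: 'a) = of_nat p * of_nat ((p choose k) div p)"
      by (metis of_nat_mult)
    then show "of_nat (p choose k) * y^k = of_nat p * (of_nat ((p choose k) div p) * y^k)"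
      by (simp add: mult.assoc)
  qed simp
  finally show ?thesis by (simp add: sum_distrib_left add.assoc)
qed

lemma commute_funpow: "(\<And>y. f (g y) = g (f y)) \<Longrightarrow> (g ^^ j) (f y) = f ((g ^^ j) y)"
  by (induction j) auto

lemma funpow_fix: "f x = x \<Longrightarrow> (f ^^ j) x = x"
  by (induction j) auto

lemma tele:
  assumes "additive f"
  shows "(\<Sum>j<i. (f ^^ j) y) - f (\<Sum>j<i. (f ^^ j) y) = y - (f ^^ i) y"
proof -
  have "f (\<Sum>j<i. (f ^^ j) y) = (\<Sum>j<i. (f ^^ Suc j) y)"
    by (simp add: additive_sum[OF assms])
  then have "(\<Sum>j<i. (f ^^ j) y) - f (\<Sum>j<i. (f ^^ j) y) = (\<Sum>j<i. (f ^^ j) y - (f ^^ Suc j) y)"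
    by (simp add: sum_subtractf)
  also have "\<dots> = y - (f ^^ i) y"
    using sum_lessThan_telescope'[of "\<lambda>j. (f ^^ j) y" i] by simp
  finally show ?thesis .
qed

lemma S2_sym: "S2_module p s t \<Longrightarrow> S2_module p t s"
  unfolding S2_module_def
proof (elim conjE, intro conjI allI)
  fix m
  assume as: "additive s" and at: "additive t" and st: "\<forall>m. s (t m) = t (s m)"
    and rel: "\<forall>m. m - s m - t (m - s m) = 0" and N: "\<forall>m. Nop p s m + Nop p t m = natmult p m"
  show "t (s m) = s (t m)" using st by simp
  show "m - t m - s (m - t m) = 0"
    using rel[rule_format, of m] st
    by (simp add: additive_diff[OF as] additive_diff[OF at] algebra_simps)
  show "Nop p t m + Nop p s m = natmult p m" using N by (simp add: add.commute)
qed

lemma additive_one_minus: "additive s \<Longrightarrow> additive (\<lambda>y. y - s y)"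
  unfolding additive_def by (simp add: algebra_simps)

lemma half_AD:
  fixes s t :: "'m::ab_group_add \<Rightarrow> 'm"
  assumes S: "S2_module p s t" and U: "bij (natmult p :: 'm \<Rightarrow> 'm)"
  shows "bij_betw (\<lambda>m. m - s m) (kerop t) (kerop t)"
proof -
  have as: "additive s" and at: "additive t" and st: "\<And>m. s (t m) = t (s m)"
    and rel: "\<And>m. m - s m - t (m - s m) = 0" and N: "\<And>m. Nop p s m + Nop p t m = natmult p m"
    using S unfolding S2_module_def by auto
  define al where "al y = y - s y" for y
  have aal: "additive al" unfolding al_def using additive_one_minus[OF as] .
  define g where "g y = (\<Sum>i<p. \<Sum>j<i. (s ^^ j) y)" for y
  have ag: "g y - s (g y) = natmult p y - Nop p s y" for y
  proof -
    have "g y - s (g y) = (\<Sum>i<p. (\<Sum>j<i. (s ^^ j) y) - s (\<Sum>j<i. (s ^^ j) y))"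
      unfolding g_def by (simp add: additive_sum[OF as] sum_subtractf)
    also have "\<dots> = (\<Sum>i<p. y - (s ^^ i) y)" by (simp add: tele[OF as])
    also have "\<dots> = natmult p y - Nop p s y"
      unfolding natmult_def Nop_def by (simp add: sum_subtractf)
    finally show ?thesis .
  qed
  have gt: "g (t y) = t (g y)" for y
    unfolding g_def by (simp add: additive_sum[OF at] commute_funpow[of t s, OF st[symmetric]])
  have ag2: "additive g"
    unfolding additive_def g_def
    by (simp add: additive_add[OF additive_funpow[OF as]] sum.distrib)
  have gs: "g (s y) = s (g y)" for y
    unfolding g_def by (simp add: additive_sum[OF as] funpow_swap1)
  have gal: "g (al y) = al (g y)" for y
    unfolding al_def by (simp add: additive_diff[OF ag2] gs)
  have Nt: "Nop p t x = natmult p x" if "t x = x" for x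
    unfolding Nop_def natmult_def using funpow_fix[of t x, OF that] by simp
  have key: "natmult p x = al (g x)" if "t x = x" for x
  proof -
    have "Nop p s x = 0" using N[of x] Nt[OF that] by simp
    then show ?thesis using ag[of x] unfolding al_def by simp
  qed
  have inj0: "x = 0" if "natmult p x = 0" for x :: 'm
    using U that natmult_0[where 'a='m] unfolding bij_def inj_def by metis
  have kt: "x \<in> kerop t \<longleftrightarrow> t x = x" for x unfolding kerop_def by auto
  have inj: "inj_on al (kerop t)"
  proof (rule inj_onI)
    fix x y assume x: "x \<in> kerop t" and y: "y \<in> kerop t" and e: "al x = al y"
    have tx: "t (x - y) = x - y" using x y kt by (simp add: additive_diff[OF at])
    have "al (x - y) = 0" using e by (simp add: additive_diff[OF aal])
    then have "natmult p (x - y) = 0" using key[OF tx] gal[of "x - y"] additive_0[OF ag2] by simp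
    then have "x - y = 0" using inj0 by blast
    then show "x = y" by simp
  qed
  have img1: "al x \<in> kerop t" for x
    using rel[of x] unfolding kt al_def by simp
  have img2: "y \<in> al ` kerop t" if y: "y \<in> kerop t" for y
  proof -
    have ty: "t y = y" using y kt by simp
    obtain z where nz: "natmult p z = g y" using U unfolding bij_def surj_def by metis
    have "natmult p (al z) = natmult p y"
      using key[OF ty] nz by (simp add: additive_natmult[OF aal, symmetric])
    then have "natmult p (al z - y) = 0" by (simp add: natmult_diff)
    then have "al z - y = 0" using inj0 by blast
    then have az: "al z = y" by simp
    have "natmult p (z - t z) = 0"
      using nz gt[of y] ty by (simp add: natmult_diff additive_natmult[OF at, symmetric])
    then have "z - t z = 0" using inj0 by blast
    then have "z \<in> kerop t" by (simp add: kerop_def)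
    then show ?thesis using az by blast
  qed
  have "al ` kerop t = kerop t" using img1 img2 by blast
  then show ?thesis using inj unfolding bij_betw_def al_def by simp
qed


lemma m1sq: "(-1 :: 'a::ring_1)^n * (-1)^n = 1"
  by (induction n) simp_all

lemma half_DA:
  fixes s t :: "'m::ab_group_add \<Rightarrow> 'm"
  assumes S: "S2_module p s t" and P: "prime p"
    and B: "bij_betw (\<lambda>m. m - t m) (kerop s) (kerop s)"
  shows "\<forall>x\<in>kerop s. natmult p x = 0 \<longrightarrow> x = 0" and "\<forall>y\<in>kerop s. \<exists>z. natmult p z = y"
proof -
  have as: "additive s" and at: "additive t" and st: "\<And>m. s (t m) = t (s m)"
    and N: "\<And>m. Nop p s m + Nop p t m = natmult p m"
    using S unfolding S2_module_def by auto
  define be where "be y = y - t y" for y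
  have abe: "additive be" unfolding be_def using additive_one_minus[OF at] .
  have ks: "x \<in> kerop s \<longleftrightarrow> s x = x" for x unfolding kerop_def by auto
  have tp: "(t ^^ p) x = x" if x: "x \<in> kerop s" for x
  proof -
    have "Nop p s x = natmult p x"
      unfolding Nop_def natmult_def using funpow_fix[of s x] x ks by simp
    then have "Nop p t x = 0" using N[of x] by simp
    then have "x - (t ^^ p) x = 0" using tele[OF at, where i=p and y=x] additive_0[OF at] unfolding Nop_def by simp
    then show ?thesis by simp
  qed
  define T where "T = mk t 0"
  define Bm where "Bm = 1 - T"
  have apT: "ap T = t" unfolding T_def using at by simp
  have apB: "ap Bm = be"
    by (rule ext) (simp only: Bm_def be_def ap_minus ap_one id_apply apT)
  define D where "D = (\<Sum>k\<in>{1..<p}. of_nat ((p choose k) div p) * (- Bm)^k)"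
  have bin: "(1 + - Bm)^p = 1 + (- Bm)^p + of_nat p * D"
    unfolding D_def by (rule binom_prime[OF P])
  have h1: "1 + - Bm = T" unfolding Bm_def by (simp only: minus_diff_eq add.commute[of 1] diff_add_cancel)
  have bin2: "T^p = 1 + (- Bm)^p + of_nat p * D" using bin by (simp only: h1)
  define E where "E = (-1 :: 'm endo)^p"
  have EE: "E * E = 1" unfolding E_def by (rule m1sq)
  have BmE: "Bm^p = E * (- Bm)^p"
  proof -
    have "(- Bm)^p = E * Bm^p" unfolding E_def by (rule power_minus)
    then have "E * (- Bm)^p = (E * E) * Bm^p" by (simp only: mult.assoc)
    then have "E * (- Bm)^p = Bm^p" using EE by (simp only: mult_1_left)
    then show ?thesis by (rule sym)
  qed
  define F where "F = - (E * D)"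
  have key: "(be ^^ p) x = natmult p (ap F x)" if x: "x \<in> kerop s" for x
  proof -
    have "ap (T^p) x = x" using tp[OF x] by (simp only: ap_power apT)
    moreover have "ap (T^p) x = x + (ap ((- Bm)^p) x + natmult p (ap D x))"
      unfolding bin2 by (simp only: ap_plus ap_one ap_times ap_of_nat id_apply add.assoc)
    ultimately have "ap ((- Bm)^p) x + natmult p (ap D x) = 0" by simp
    then have m: "ap ((- Bm)^p) x = - natmult p (ap D x)"
      by (simp only: eq_neg_iff_add_eq_0)
    have "(be ^^ p) x = ap (Bm^p) x" by (simp only: ap_power apB)
    also have "\<dots> = ap E (- natmult p (ap D x))" using m BmE by (simp only: ap_times)
    also have "\<dots> = - natmult p (ap E (ap D x))"
      by (simp only: ap_uminus additive_natmult[OF additive_ap])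
    also have "\<dots> = natmult p (- ap E (ap D x))"
      by (simp only: additive_uminus[OF additive_natmult'])
    also have "\<dots> = natmult p (ap F x)"
      unfolding F_def by (simp only: ap_neg ap_times)
    finally show ?thesis .
  qed
  have bp: "bij_betw (be ^^ p) (kerop s) (kerop s)"
  proof -
    have "be = (\<lambda>m. m - t m)" by (rule ext) (simp only: be_def)
    then show ?thesis using bij_betw_funpow[OF B, of p] by (simp only:)
  qed
  have z0: "(0::'m) \<in> kerop s" unfolding kerop_def using additive_0[OF as] by simp
  have bp0: "(be ^^ p) 0 = 0" using additive_0[OF additive_funpow[OF abe]] .
  show "\<forall>x\<in>kerop s. natmult p x = 0 \<longrightarrow> x = 0"
  proof (intro ballI impI)
    fix x assume x: "x \<in> kerop s" and n: "natmult p x = 0"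
    have c: "ap F (natmult p x) = natmult p (ap F x)" by (rule additive_natmult[OF additive_ap])
    have "(be ^^ p) x = natmult p (ap F x)" by (rule key[OF x])
    also have "\<dots> = ap F (natmult p x)" using c by (rule sym)
    also have "\<dots> = 0" using n by (simp only: ap_0)
    also have "\<dots> = (be ^^ p) 0" using bp0 by (rule sym)
    finally have "(be ^^ p) x = (be ^^ p) 0" .
    then show "x = 0" using bp x z0 unfolding bij_betw_def inj_on_def by blast
  qed
  show "\<forall>y\<in>kerop s. \<exists>z. natmult p z = y"
  proof
    fix y assume y: "y \<in> kerop s"
    have im: "(be ^^ p) ` kerop s = kerop s" by (rule bij_betw_imp_surj_on[OF bp])
    have "y \<in> (be ^^ p) ` kerop s" using y im by (simp only:)
    then obtain z where z2: "y = (be ^^ p) z" and z1: "z \<in> kerop s" by (rule imageE)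
    have "natmult p (ap F z) = y" using key[OF z1] z2 by simp
    then show "\<exists>z. natmult p z = y" by blast
  qed
qed

lemma ker_diff: "additive f \<Longrightarrow> x \<in> kerop f \<Longrightarrow> y \<in> kerop f \<Longrightarrow> x - y \<in> kerop f"
  unfolding kerop_def by (simp add: additive_diff)

lemma ker_0: "additive f \<Longrightarrow> (0::'a::ab_group_add) \<in> kerop f"
  unfolding kerop_def by (simp add: additive_0)


lemma D_inter:
  assumes as: "additive s" and at: "additive t"
    and B: "bij_betw (\<lambda>m. m - t m) (kerop s) (kerop s)"
    and x: "x \<in> kerop s" and xt: "x \<in> kerop t"
  shows "x = 0"
proof -
  have z: "(0::'a) \<in> kerop s" by (rule ker_0[OF as])
  have "x - t x = 0" using xt unfolding kerop_def by simp
  moreover have "(0::'a) - t 0 = 0" using additive_0[OF at] by simp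
  ultimately have "(\<lambda>m. m - t m) x = (\<lambda>m. m - t m) 0" by simp
  then show ?thesis using B x z unfolding bij_betw_def inj_on_def by blast
qed

lemma rel_ab:
  assumes "S2_module p s t"
  shows "(m - s m) \<in> kerop t"
  using assms unfolding S2_module_def kerop_def by blast

lemma D_to_C:
  assumes S: "S2_module p s t"
    and Bs: "bij_betw (\<lambda>m. m - s m) (kerop t) (kerop t)"
    and Bt: "bij_betw (\<lambda>m. m - t m) (kerop s) (kerop s)"
  shows "internal_direct_sum (kerop s) (kerop t)"
  unfolding internal_direct_sum_def
proof
  fix m
  have as: "additive s" and at: "additive t" using S unfolding S2_module_def by auto
  have im: "(\<lambda>m. m - s m) ` kerop t = kerop t" by (rule bij_betw_imp_surj_on[OF Bs])
  have "m - s m \<in> (\<lambda>m. m - s m) ` kerop t" using rel_ab[OF S, of m] im by (simp only:)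
  then obtain v where v1: "m - s m = v - s v" and v2: "v \<in> kerop t" by (rule imageE)
  have u: "m - v \<in> kerop s"
    using v1 unfolding kerop_def by (simp add: additive_diff[OF as] algebra_simps)
  show "\<exists>!ab. fst ab \<in> kerop s \<and> snd ab \<in> kerop t \<and> m = fst ab + snd ab"
  proof (rule ex1I[of _ "(m - v, v)"])
    show "fst (m - v, v) \<in> kerop s \<and> snd (m - v, v) \<in> kerop t \<and> m = fst (m - v, v) + snd (m - v, v)"
      using u v2 by simp
  next
    fix ab assume h: "fst ab \<in> kerop s \<and> snd ab \<in> kerop t \<and> m = fst ab + snd ab"
    obtain a b where ab: "ab = (a, b)" by (cases ab)
    have a: "a \<in> kerop s" and b: "b \<in> kerop t" and mab: "m = a + b" using h ab by auto
    have d1: "a - (m - v) \<in> kerop s" by (rule ker_diff[OF as a u])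
    have d2: "v - b \<in> kerop t" by (rule ker_diff[OF at v2 b])
    have eq: "a - (m - v) = v - b" using mab by (simp add: algebra_simps)
    have "a - (m - v) = 0" using D_inter[OF as at Bt d1] d2 eq by simp
    then have "a = m - v" by simp
    moreover then have "b = v" using mab by (simp add: algebra_simps)
    ultimately show "ab = (m - v, v)" using ab by simp
  qed
qed

lemma D_to_B1:
  assumes S: "S2_module p s t"
    and Bt: "bij_betw (\<lambda>m. m - t m) (kerop s) (kerop s)"
  shows "imop t = kerop s"
proof
  show "imop t \<subseteq> kerop s"
    unfolding imop_def using rel_ab[OF S2_sym[OF S]] by blast
  show "kerop s \<subseteq> imop t"
  proof
    fix x assume x: "x \<in> kerop s"
    have im: "(\<lambda>m. m - t m) ` kerop s = kerop s" by (rule bij_betw_imp_surj_on[OF Bt])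
    have "x \<in> (\<lambda>m. m - t m) ` kerop s" using x im by (simp only:)
    then show "x \<in> imop t" unfolding imop_def by blast
  qed
qed

lemma BC_to_D1:
  assumes S: "S2_module p s t" and ct: "imop s = kerop t"
    and ds: "internal_direct_sum (kerop s) (kerop t)"
  shows "bij_betw (\<lambda>m. m - s m) (kerop t) (kerop t)"
proof -
  have as: "additive s" and at: "additive t" using S unfolding S2_module_def by auto
  have uniq: "x = 0" if x1: "x \<in> kerop s" and x2: "x \<in> kerop t" for x
  proof -
    have e: "\<exists>!ab. fst ab \<in> kerop s \<and> snd ab \<in> kerop t \<and> x = fst ab + snd ab"
      using ds unfolding internal_direct_sum_def by blast
    have p1: "fst (x, 0) \<in> kerop s \<and> snd (x, 0) \<in> kerop t \<and> x = fst (x, 0) + snd (x, 0)"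
      using x1 ker_0[OF at] by simp
    have p2: "fst (0, x) \<in> kerop s \<and> snd (0, x) \<in> kerop t \<and> x = fst (0, x) + snd (0, x)"
      using x2 ker_0[OF as] by simp
    obtain c where hc: "\<forall>y. (fst y \<in> kerop s \<and> snd y \<in> kerop t \<and> x = fst y + snd y) \<longrightarrow> y = c"
      using e by blast
    have "(x, 0) = c" using hc p1 by blast
    moreover have "(0, x) = c" using hc p2 by blast
    ultimately have "(x, 0) = (0, x)" by simp
    then show ?thesis by simp
  qed
  have inj: "inj_on (\<lambda>m. m - s m) (kerop t)"
  proof (rule inj_onI)
    fix x y assume x: "x \<in> kerop t" and y: "y \<in> kerop t" and e: "x - s x = y - s y"
    have "x - y \<in> kerop s" using e unfolding kerop_def by (simp add: additive_diff[OF as] algebra_simps)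
    moreover have "x - y \<in> kerop t" by (rule ker_diff[OF at x y])
    ultimately have "x - y = 0" by (rule uniq)
    then show "x = y" by simp
  qed
  have im1: "(\<lambda>m. m - s m) ` kerop t \<subseteq> kerop t" using rel_ab[OF S] by blast
  have im2: "kerop t \<subseteq> (\<lambda>m. m - s m) ` kerop t"
  proof
    fix y assume y: "y \<in> kerop t"
    then have "y \<in> imop s" using ct by simp
    then obtain w where w: "y = w - s w" unfolding imop_def by blast
    have "\<exists>!ab. fst ab \<in> kerop s \<and> snd ab \<in> kerop t \<and> w = fst ab + snd ab"
      using ds unfolding internal_direct_sum_def by blast
    then obtain ab where ab: "fst ab \<in> kerop s" "snd ab \<in> kerop t" "w = fst ab + snd ab" by blast
    have "fst ab - s (fst ab) = 0" using ab(1) unfolding kerop_def by simp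
    then have "y = snd ab - s (snd ab)" using w ab(3) by (simp add: additive_add[OF as] algebra_simps)
    then show "y \<in> (\<lambda>m. m - s m) ` kerop t" using ab(2) by blast
  qed
  show ?thesis unfolding bij_betw_def using inj im1 im2 by blast
qed

lemma D_to_A:
  fixes s t :: "'m::ab_group_add \<Rightarrow> 'm"
  assumes S: "S2_module p s t" and P: "prime p"
    and Bs: "bij_betw (\<lambda>m. m - s m) (kerop t) (kerop t)"
    and Bt: "bij_betw (\<lambda>m. m - t m) (kerop s) (kerop s)"
  shows "bij (natmult p :: 'm \<Rightarrow> 'm)"
proof -
  have as: "additive s" and at: "additive t" using S unfolding S2_module_def by auto
  note h1 = half_DA[OF S P Bt]
  note h2 = half_DA[OF S2_sym[OF S] P Bs]
  have C: "internal_direct_sum (kerop s) (kerop t)" by (rule D_to_C[OF S Bs Bt])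
  have dec: "\<exists>u v. u \<in> kerop s \<and> v \<in> kerop t \<and> m = u + v" for m
  proof -
    have "\<exists>!ab. fst ab \<in> kerop s \<and> snd ab \<in> kerop t \<and> m = fst ab + snd ab"
      using C unfolding internal_direct_sum_def by blast
    then show ?thesis by blast
  qed
  have nks: "natmult p u \<in> kerop f" if "u \<in> kerop f" "additive f" for u f
    using that unfolding kerop_def by (simp add: additive_natmult)
  have inj: "inj (natmult p :: 'm \<Rightarrow> 'm)"
  proof (rule injI)
    fix x y :: 'm assume e: "natmult p x = natmult p y"
    obtain u v where u: "u \<in> kerop s" and v: "v \<in> kerop t" and xy: "x - y = u + v"
      using dec by blast
    have "natmult p (x - y) = 0" using e by (simp add: natmult_diff)
    then have sum0: "natmult p u + natmult p v = 0" using xy by (simp add: natmult_add)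
    have pu: "natmult p u \<in> kerop s" by (rule nks[OF u as])
    have pv: "natmult p v \<in> kerop t" by (rule nks[OF v at])
    have "0 - natmult p v \<in> kerop t" by (rule ker_diff[OF at ker_0[OF at] pv])
    moreover have "natmult p u = - natmult p v" using sum0 by (simp add: add_eq_0_iff2)
    ultimately have "natmult p u \<in> kerop t" by simp
    then have pu0: "natmult p u = 0" by (rule D_inter[OF as at Bt pu])
    then have u0: "u = 0" using h1(1) u by blast
    have pv0: "natmult p v = 0" using sum0 pu0 by simp
    then have v0: "v = 0" using h2(1) v by blast
    show "x = y" using xy u0 v0 by simp
  qed
  have surj0: "\<exists>z. natmult p z = m" for m :: 'm
  proof -
    obtain u v where u: "u \<in> kerop s" and v: "v \<in> kerop t" and m: "m = u + v"
      using dec by blast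
    obtain u' where u': "natmult p u' = u" using h1(2) u by blast
    obtain v' where v': "natmult p v' = v" using h2(2) v by blast
    have "natmult p (u' + v') = m" using u' v' m by (simp add: natmult_add)
    then show ?thesis by blast
  qed
  have surj: "surj (natmult p :: 'm \<Rightarrow> 'm)"
    unfolding surj_def using surj0 by metis
  show ?thesis using inj surj by (rule bijI)
qed

theorem proposition7p7:
  fixes p :: nat and s t :: "'m::ab_group_add \<Rightarrow> 'm"
  assumes "prime p" and "S2_module p s t"
  shows "(uniquely_divisible p TYPE('m) \<longleftrightarrow>
            cohom_trivial s t \<and> internal_direct_sum (kerop s) (kerop t))
       \<and> (uniquely_divisible p TYPE('m) \<longleftrightarrow>
            bij_betw (\<lambda>m. m - s m) (kerop t) (kerop t) \<and>
            bij_betw (\<lambda>m. m - t m) (kerop s) (kerop s))"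
proof -
  note P = assms(1) and S = assms(2)
  note S' = S2_sym[OF S]
  have ud: "uniquely_divisible p TYPE('m) \<longleftrightarrow> bij (natmult p :: 'm \<Rightarrow> 'm)"
    unfolding uniquely_divisible_def by simp
  have AD: "bij_betw (\<lambda>m. m - s m) (kerop t) (kerop t) \<and> bij_betw (\<lambda>m. m - t m) (kerop s) (kerop s)"
    if "bij (natmult p :: 'm \<Rightarrow> 'm)"
    using half_AD[OF S that] half_AD[OF S' that] by simp
  have DA: "bij (natmult p :: 'm \<Rightarrow> 'm)"
    if "bij_betw (\<lambda>m. m - s m) (kerop t) (kerop t)" "bij_betw (\<lambda>m. m - t m) (kerop s) (kerop s)"
    by (rule D_to_A[OF S P that])
  have DBC: "cohom_trivial s t \<and> internal_direct_sum (kerop s) (kerop t)"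
    if Bs: "bij_betw (\<lambda>m. m - s m) (kerop t) (kerop t)" and Bt: "bij_betw (\<lambda>m. m - t m) (kerop s) (kerop s)"
  proof -
    have "imop t = kerop s" by (rule D_to_B1[OF S Bt])
    moreover have "imop s = kerop t" by (rule D_to_B1[OF S' Bs])
    moreover have "internal_direct_sum (kerop s) (kerop t)" by (rule D_to_C[OF S Bs Bt])
    ultimately show ?thesis unfolding cohom_trivial_def by blast
  qed
  have BCD: "bij_betw (\<lambda>m. m - s m) (kerop t) (kerop t) \<and> bij_betw (\<lambda>m. m - t m) (kerop s) (kerop s)"
    if ct: "cohom_trivial s t" and ds: "internal_direct_sum (kerop s) (kerop t)"
  proof -
    have c1: "imop s = kerop t" and c2: "imop t = kerop s" using ct unfolding cohom_trivial_def by auto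
    have ds': "internal_direct_sum (kerop t) (kerop s)"
      unfolding internal_direct_sum_def
    proof
      fix m
      have e: "\<exists>!ab. fst ab \<in> kerop s \<and> snd ab \<in> kerop t \<and> m = fst ab + snd ab"
        using ds unfolding internal_direct_sum_def by blast
      show "\<exists>!ab. fst ab \<in> kerop t \<and> snd ab \<in> kerop s \<and> m = fst ab + snd ab"
      proof -
        from e obtain ab where ab: "fst ab \<in> kerop s \<and> snd ab \<in> kerop t \<and> m = fst ab + snd ab"
          and un: "\<And>cd. fst cd \<in> kerop s \<and> snd cd \<in> kerop t \<and> m = fst cd + snd cd \<Longrightarrow> cd = ab"
          by (rule ex1E) blast
        show ?thesis
        proof (rule ex1I[of _ "(snd ab, fst ab)"])
          show "fst (snd ab, fst ab) \<in> kerop t \<and> snd (snd ab, fst ab) \<in> kerop s \<and> m = fst (snd ab, fst ab) + snd (snd ab, fst ab)"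
            using ab by (simp add: add.commute)
        next
          fix cd assume h: "fst cd \<in> kerop t \<and> snd cd \<in> kerop s \<and> m = fst cd + snd cd"
          have "(snd cd, fst cd) = ab" using h by (intro un) (simp add: add.commute)
          then show "cd = (snd ab, fst ab)" by auto
        qed
      qed
    qed
    show ?thesis using BC_to_D1[OF S c1 ds] BC_to_D1[OF S' c2 ds'] by simp
  qed
  show ?thesis using ud AD DA DBC BCD by blast
qed

end
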